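(* Let $g\geqslant1$ be odd and $i\geqslant0$ an integer. Then: (i) there exists $u_{g,i}\in\mathbb{C}[\alpha,\gamma]$ which is a unit modulo $J_g^-$ such that $u_{g,i}\gamma^i\zeta^-_{g-2i-1}\equiv\gamma^{i+1}\zeta^-_{g-2i-2}\pmod{J_g^-}$; (ii) there exists $v_{g,i}\in\mathbb{C}[\alpha,\gamma]$ which is a unit modulo $J_g^-$ such that $v_{g,i}\gamma^i\zeta^-_{g-2i-1}\equiv\gamma^{i+1}\zeta^-_{g-2i-3}\pmod{J_g^-}$.
   Context: $\zeta_k^-\in\mathbb{C}[\alpha,\gamma]$: $\zeta^-_i=0$ for $i<0$, $\zeta^-_0=1$, $\zeta^-_{k+1}=\alpha\zeta^-_k-16k^2\zeta^-_{k-1}+2k(k-1)\gamma\zeta^-_{k-2}$ for $k$ odd and $\zeta^-_{k+1}=\alpha\zeta^-_k+2k(k-1)\gamma\zeta^-_{k-2}$ for $k$ even ($k\geqslant0$); $J^-_k=(\zeta^-_k,\zeta^-_{k+1},\zeta^-_{k+2})$. A unit modulo an ideal $J$ is an element whose image in $\mathbb{C}[\alpha,\gamma]/J$ is invertible. *)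

theory Defs
  imports Complex_Main "HOL-Computational_Algebra.Polynomial"
begin

text \<open>C[alpha,gamma] is represented as (C[alpha])[gamma], i.e. complex poly poly.
  alpha is the inner variable, gamma the outer one.\<close>

type_synonym R2 = "complex poly poly"

definition alph :: R2 where "alph = [:[:0, 1:]:]"
definition gam :: R2 where "gam = [:0, 1:]"

text \<open>zeta^-_k for k >= 0; the recursion with zeta^-_i = 0 for i < 0 written out.\<close>
fun zeta_nat :: "nat \<Rightarrow> R2" where
  "zeta_nat 0 = 1"
| "zeta_nat (Suc 0) = alph * zeta_nat 0"
| "zeta_nat (Suc (Suc 0)) = alph * zeta_nat 1 - 16 * 1^2 * zeta_nat 0"
| "zeta_nat (Suc (Suc (Suc k))) =
     alph * zeta_nat (k + 2)
     - (if odd (k + 2) then 16 * of_nat ((k + 2)^2) * zeta_nat (k + 1) else 0)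
     + 2 * of_nat ((k + 2) * (k + 1)) * gam * zeta_nat k"

definition zeta :: "int \<Rightarrow> R2" where
  "zeta k = (if k < 0 then 0 else zeta_nat (nat k))"

definition Jm :: "int \<Rightarrow> R2 set" where
  "Jm k = {a * zeta k + b * zeta (k + 1) + c * zeta (k + 2) | a b c. True}"

definition cong_mod :: "R2 set \<Rightarrow> R2 \<Rightarrow> R2 \<Rightarrow> bool" where
  "cong_mod J x y \<longleftrightarrow> x - y \<in> J"

definition unit_mod :: "R2 set \<Rightarrow> R2 \<Rightarrow> bool" where
  "unit_mod J u \<longleftrightarrow> (\<exists>w. cong_mod J (u * w) 1)"

end

theory Submission imports Defs "HOL-Computational_Algebra.Computational_Algebra" "HOL-Computational_Algebra.Field_as_Ring"
begin

lemma J_0: "0 \<in> Jm k"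
  unfolding Jm_def by (rule CollectI, rule exI[of _ 0], rule exI[of _ 0], rule exI[of _ 0]) simp

lemma J_add: "x \<in> Jm k \<Longrightarrow> y \<in> Jm k \<Longrightarrow> x + y \<in> Jm k"
  unfolding Jm_def
proof (clarify)
  fix a b c a' b' c'
  show "\<exists>a'' b'' c''. a * zeta k + b * zeta (k + 1) + c * zeta (k + 2) + (a' * zeta k + b' * zeta (k + 1) + c' * zeta (k + 2)) =
           a'' * zeta k + b'' * zeta (k + 1) + c'' * zeta (k + 2) \<and> True"
    by (rule exI[of _ "a+a'"], rule exI[of _ "b+b'"], rule exI[of _ "c+c'"]) (simp add: algebra_simps)
qed

lemma J_mult: "x \<in> Jm k \<Longrightarrow> r * x \<in> Jm k"
  unfolding Jm_def
proof (clarify)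
  fix a b c
  show "\<exists>a'' b'' c''. r * (a * zeta k + b * zeta (k + 1) + c * zeta (k + 2)) =
           a'' * zeta k + b'' * zeta (k + 1) + c'' * zeta (k + 2) \<and> True"
    by (rule exI[of _ "r*a"], rule exI[of _ "r*b"], rule exI[of _ "r*c"]) (simp add: algebra_simps)
qed

lemma J_mult2: "x \<in> Jm k \<Longrightarrow> x * r \<in> Jm k"
  using J_mult[of x k r] by (simp add: mult.commute)

lemma J_neg: "x \<in> Jm k \<Longrightarrow> - x \<in> Jm k"
  using J_mult[of x k "-1"] by simp

lemma J_diff: "x \<in> Jm k \<Longrightarrow> y \<in> Jm k \<Longrightarrow> x - y \<in> Jm k"
proof -
  assume a: "x \<in> Jm k" "y \<in> Jm k"
  have "x + - y \<in> Jm k" by (rule J_add[OF a(1) J_neg[OF a(2)]])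
  then show ?thesis by simp
qed

lemma J_gen0: "zeta k \<in> Jm k"
  unfolding Jm_def by (rule CollectI, rule exI[of _ 1], rule exI[of _ 0], rule exI[of _ 0]) simp
lemma J_gen1: "zeta (k+1) \<in> Jm k"
  unfolding Jm_def by (rule CollectI, rule exI[of _ 0], rule exI[of _ 1], rule exI[of _ 0]) simp
lemma J_gen2: "zeta (k+2) \<in> Jm k"
  unfolding Jm_def by (rule CollectI, rule exI[of _ 0], rule exI[of _ 0], rule exI[of _ 1]) simp

definition cst :: "complex \<Rightarrow> R2" where "cst c = [:[:c:]:]"

lemma cst_mult: "cst a * cst b = cst (a * b)"
  unfolding cst_def by simp

lemma of_int_R2: "(of_int n :: R2) = cst (of_int n)"
  unfolding cst_def by (simp add: of_int_poly)

lemma J_cancel: assumes "of_int c * x \<in> Jm k" "c \<noteq> 0" shows "x \<in> Jm k"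
proof -
  have "cst (1 / of_int c) * (of_int c * x) = x"
    using assms(2) by (simp add: of_int_R2 mult.assoc[symmetric] cst_mult cst_def one_pCons[symmetric])
  with J_mult[OF assms(1), of "cst (1 / of_int c)"] show ?thesis by simp
qed

lemma zeta_neg: "k < 0 \<Longrightarrow> zeta k = 0" by (simp add: zeta_def)

lemma zrec: assumes "k \<ge> 0"
  shows "zeta (k+1) = alph * zeta k - of_int (if odd k then 16*k^2 else 0) * zeta (k-1)
          + of_int (2*k*(k-1)) * gam * zeta (k-2)"
proof -
  have "k = 0 \<or> k = 1 \<or> k = int (nat (k-2)) + 2" using assms by linarith
  then consider "k = 0" | "k = 1" | n where "k = int n + 2" by blast
  then show ?thesis
  proof cases
    case 1 then show ?thesis by (simp add: zeta_def)
  next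
    case 2 then show ?thesis by (simp add: zeta_def numeral_2_eq_2)
  next
    case 3
    have a: "nat (k+1) = Suc (Suc (Suc n))" "nat k = n + 2" "nat (k - 1) = n + 1" "nat (k-2) = n"
      using 3 by auto
    have b: "odd k = odd (n+2)" using 3 by simp
    have c: "(of_int (16 * k^2) :: R2) = 16 * of_nat ((n+2)^2)"
      using 3 by (simp add: add.commute)
    have d: "(of_int (2*k*(k-1)) :: R2) = 2 * of_nat ((n+2)*(n+1))"
      using 3 by (simp add: algebra_simps)
    show ?thesis using 3 a b c d by (simp add: zeta_def)
  qed
qed

lemma stepJ:
  assumes "G * zeta (k+1) \<in> Jm g" "G * zeta k \<in> Jm g" "odd k \<Longrightarrow> G * zeta (k-1) \<in> Jm g"
  shows "G * gam * zeta (k-2) \<in> Jm g"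
proof (cases "k < 2")
  case True then show ?thesis by (simp add: zeta_neg J_0)
next
  case False
  then have k: "k \<ge> 0" by simp
  have eq: "of_int (2*k*(k-1)) * (G * gam * zeta (k-2)) =
     G * zeta (k+1) - alph * (G * zeta k) + of_int (if odd k then 16*k^2 else 0) * (G * zeta (k-1))"
    by (simp only: zrec[OF k]) (simp add: algebra_simps)
  have t3: "of_int (if odd k then 16*k^2 else 0) * (G * zeta (k-1)) \<in> Jm g"
    using assms(3) by (cases "odd k") (auto intro: J_mult simp: J_0)
  have "of_int (2*k*(k-1)) * (G * gam * zeta (k-2)) \<in> Jm g"
    unfolding eq by (intro J_add J_diff J_mult assms(1,2) t3)
  moreover have "2*k*(k-1) \<noteq> 0" using False by simp
  ultimately show ?thesis by (rule J_cancel)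
qed

lemma descent:
  fixes m n d :: nat
  assumes d: "d \<le> 1"
    and b1: "gam^d * zeta (2*int m) \<in> Jm (2*int m+1)"
    and b2: "gam^d * zeta (2*int m+1) \<in> Jm (2*int m+1)"
    and b3: "zeta (2*int m+2) \<in> Jm (2*int m+1)"
  shows "gam^(n+d) * zeta (2*int m - 2*int n) \<in> Jm (2*int m+1) \<and>
         gam^(n+d) * zeta (2*int m - 2*int n + 1) \<in> Jm (2*int m+1) \<and>
         gam^n * zeta (2*int m - 2*int n + 2) \<in> Jm (2*int m+1)"
proof (induction n)
  case 0 then show ?case using b1 b2 b3 by simp
next
  case (Suc n)
  then have A: "gam^(n+d) * zeta (2*int m - 2*int n) \<in> Jm (2*int m+1)"
    and B: "gam^(n+d) * zeta (2*int m - 2*int n + 1) \<in> Jm (2*int m+1)"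
    and C: "gam^n * zeta (2*int m - 2*int n + 2) \<in> Jm (2*int m+1)" by auto
  have A': "gam^(n+d) * gam * zeta ((2*int m - 2*int n) - 2) \<in> Jm (2*int m+1)"
    by (rule stepJ[OF B A]) simp
  have C2: "gam^(n+d) * zeta ((2*int m - 2*int n + 1) + 1) \<in> Jm (2*int m+1)"
  proof -
    have "gam^(n+d) * zeta ((2*int m - 2*int n + 1) + 1) = gam^d * (gam^n * zeta (2*int m - 2*int n + 2))"
      by (simp add: power_add algebra_simps)
    then show ?thesis by (metis J_mult[OF C])
  qed
  have B': "gam^(n+d) * gam * zeta ((2*int m - 2*int n + 1) - 2) \<in> Jm (2*int m+1)"
    by (rule stepJ[OF C2 B]) (simp add: A)
  have C': "gam^(Suc n) * zeta (2*int m - 2*int n) \<in> Jm (2*int m+1)"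
  proof -
    have "gam^(Suc n) = gam^(1-d) * gam^(n+d)"
      using d by (simp add: power_add[symmetric])
    then have eqC: "gam^(Suc n) * zeta (2*int m - 2*int n) = gam^(1-d) * (gam^(n+d) * zeta (2*int m - 2*int n))"
      by (simp add: mult.assoc)
    show ?thesis unfolding eqC by (rule J_mult[OF A])
  qed
  have pg: "gam^(n+d) * gam = gam^(Suc n+d)" by (simp add: mult.commute)
  have i1: "(2*int m - 2*int n) - 2 = 2*int m - 2*int (Suc n)" by simp
  have i2: "(2*int m - 2*int n + 1) - 2 = 2*int m - 2*int (Suc n) + 1" by simp
  have e1: "gam^(n+d) * gam * zeta ((2*int m - 2*int n) - 2) = gam^(Suc n+d) * zeta (2*int m - 2*int (Suc n))"
    by (simp only: pg i1)
  have e2: "gam^(n+d) * gam * zeta ((2*int m - 2*int n + 1) - 2) = gam^(Suc n+d) * zeta (2*int m - 2*int (Suc n) + 1)"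
    by (simp only: pg i2)
  have e3: "2*int m - 2*int (Suc n) + 2 = 2*int m - 2*int n" by simp
  have r1: "gam^(Suc n+d) * zeta (2*int m - 2*int (Suc n)) \<in> Jm (2*int m+1)" using A' by (simp only: e1)
  have r2: "gam^(Suc n+d) * zeta (2*int m - 2*int (Suc n) + 1) \<in> Jm (2*int m+1)" using B' by (simp only: e2)
  have r3: "gam^(Suc n) * zeta (2*int m - 2*int (Suc n) + 2) \<in> Jm (2*int m+1)" using C' by (simp only: e3)
  show ?case by (rule conjI[OF r1 conjI[OF r2 r3]])
qed

definition dp :: "nat \<Rightarrow> complex poly" where
  "dp j = (\<Prod>l\<le>j. [:of_nat (4*(2*l+1)), -1:])"
definition ep :: "nat \<Rightarrow> complex poly" where
  "ep j = (\<Prod>l\<le>j. [:- of_nat (4*(2*l+1)), -1:])"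

lemma Dt_suc: "[:dp (Suc j):] = [:dp j:] * (4*(2*of_nat j+3) - alph)"
  by (simp add: dp_def prod.atMost_Suc alph_def of_nat_poly numeral_poly algebra_simps)

lemma Et_suc: "[:ep (Suc j):] = [:ep j:] * (-(4*(2*of_nat j+3)) - alph)"
  by (simp add: ep_def prod.atMost_Suc alph_def of_nat_poly numeral_poly algebra_simps)

lemma Dt_0: "[:dp 0:] = 4 - alph"
  by (simp add: dp_def alph_def numeral_poly)

lemma Et_0: "[:ep 0:] = -4 - alph"
  by (simp add: ep_def alph_def numeral_poly)

lemma chain_id:
  fixes a g G t y0 y1 y2 y3 y4 D E :: "'a::comm_ring_1"
  assumes "y3 = a*y2 + 2*(2*t+2)*(2*t+1)*g*y0"
    "y4 = a*y3 - 16*(2*t+3)^2*y2 + 2*(2*t+3)*(2*t+2)*g*y1"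
  shows "(D*(4*(2*t+3) - a))*(G*y3 + 4*(2*t+3)*(G*y2)) + (E*(-(4*(2*t+3)) - a))*(4*(2*t+3)*(G*y2) - G*y3)
   = 2*(2*t+3)*(2*t+2)*(D*((g*G)*y1 + 4*(2*t+1)*((g*G)*y0)) + E*(4*(2*t+1)*((g*G)*y0) - (g*G)*y1)) + (E - D)*(G*y4)"
  unfolding assms by (simp add: algebra_simps power2_eq_square)

definition Wc :: "nat \<Rightarrow> nat \<Rightarrow> R2" where
  "Wc m j = [:dp j:] * (gam^(m-j) * zeta (2*int j+1) + 4*(2*of_nat j+1) * (gam^(m-j) * zeta (2*int j)))
          + [:ep j:] * (4*(2*of_nat j+1) * (gam^(m-j) * zeta (2*int j)) - gam^(m-j) * zeta (2*int j+1))"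

lemma zr1: "zeta (2*int j+3) = alph*zeta (2*int j+2) + 2*(2*of_nat j+2)*(2*of_nat j+1)*gam*zeta (2*int j)"
proof -
  have "zeta (2*int j+2+1) = alph * zeta (2*int j+2) - of_int (if odd (2*int j+2) then 16*(2*int j+2)^2 else 0) * zeta (2*int j+2-1)
          + of_int (2*(2*int j+2)*(2*int j+2-1)) * gam * zeta (2*int j+2-2)"
    by (rule zrec) simp
  moreover have "2*int j+2+1 = 2*int j+3" "2*int j+2-2 = 2*int j" by simp_all
  moreover have "(of_int (2*(2*int j+2)*(2*int j+2-1)) :: R2) = 2*(2*of_nat j+2)*(2*of_nat j+1)"
    by (simp add: algebra_simps)
  ultimately show ?thesis by simp
qed

lemma zr2: "zeta (2*int j+4) = alph*zeta (2*int j+3) - 16*(2*of_nat j+3)^2*zeta (2*int j+2)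
            + 2*(2*of_nat j+3)*(2*of_nat j+2)*gam*zeta (2*int j+1)"
proof -
  have "zeta (2*int j+3+1) = alph * zeta (2*int j+3) - of_int (if odd (2*int j+3) then 16*(2*int j+3)^2 else 0) * zeta (2*int j+3-1)
          + of_int (2*(2*int j+3)*(2*int j+3-1)) * gam * zeta (2*int j+3-2)"
    by (rule zrec) simp
  moreover have "2*int j+3+1 = 2*int j+4" "2*int j+3-1 = 2*int j+2" "2*int j+3-2 = 2*int j+1" by simp_all
  moreover have "(of_int (2*(2*int j+3)*(2*int j+3-1)) :: R2) = 2*(2*of_nat j+3)*(2*of_nat j+2)"
    by (simp add: algebra_simps)
  moreover have "(of_int (16*(2*int j+3)^2) :: R2) = 16*(2*of_nat j+3)^2"
    by simp
  moreover have "odd (2*int j+3)" by simp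
  ultimately show ?thesis by simp
qed

lemma W_step:
  assumes "Suc j \<le> m"
  shows "Wc m (Suc j) = 2*(2*of_nat j+3)*(2*of_nat j+2) * Wc m j
     + ([:ep j:] - [:dp j:]) * (gam^(m - Suc j) * zeta (2*int j+4))"
proof -
  define n where "n = m - Suc j"
  have mj: "m - j = Suc n" using assms n_def by simp
  have i1: "2*int (Suc j)+1 = 2*int j+3" "2*int (Suc j) = 2*int j+2" by simp_all
  have c1: "(2*of_nat (Suc j)+1 :: R2) = 2*of_nat j+3" by simp
  have i2: "2*int j+2+1 = 2*int j+3" by simp
  have "Wc m (Suc j) = ([:dp j:]*(4*(2*of_nat j+3) - alph))*(gam^n*zeta (2*int j+3) + 4*(2*of_nat j+3)*(gam^n*zeta (2*int j+2)))
      + ([:ep j:]*(-(4*(2*of_nat j+3)) - alph))*(4*(2*of_nat j+3)*(gam^n*zeta (2*int j+2)) - gam^n*zeta (2*int j+3))"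
    unfolding Wc_def Dt_suc Et_suc i1 c1 i2 n_def[symmetric] ..
  also have "\<dots> = 2*(2*of_nat j+3)*(2*of_nat j+2)*([:dp j:]*((gam*gam^n)*zeta (2*int j+1) + 4*(2*of_nat j+1)*((gam*gam^n)*zeta (2*int j)))
      + [:ep j:]*(4*(2*of_nat j+1)*((gam*gam^n)*zeta (2*int j)) - (gam*gam^n)*zeta (2*int j+1)))
      + ([:ep j:] - [:dp j:])*(gam^n*zeta (2*int j+4))"
    by (rule chain_id[OF zr1 zr2])
  also have "\<dots> = 2*(2*of_nat j+3)*(2*of_nat j+2) * Wc m j + ([:ep j:] - [:dp j:]) * (gam^(m - Suc j) * zeta (2*int j+4))"
    unfolding Wc_def mj n_def[symmetric] by simp
  finally show ?thesis .
qed

lemma J_gen0': "i = k \<Longrightarrow> zeta i \<in> Jm k" using J_gen0 by simp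
lemma J_gen1': "i = k+1 \<Longrightarrow> zeta i \<in> Jm k" using J_gen1 by simp
lemma J_gen2': "i = k+2 \<Longrightarrow> zeta i \<in> Jm k" using J_gen2 by simp

lemma z0: "zeta 0 = 1" by (simp add: zeta_def)
lemma z1: "zeta 1 = alph" by (simp add: zeta_def)

lemma gam_em: "gam * zeta (2*int m) \<in> Jm (2*int m+1)"
proof -
  have a: "1 * zeta ((2*int m+2)+1) \<in> Jm (2*int m+1)" by (simp, rule J_gen2') simp
  have b: "1 * zeta (2*int m+2) \<in> Jm (2*int m+1)" by (simp, rule J_gen1') simp
  have "1 * gam * zeta ((2*int m+2) - 2) \<in> Jm (2*int m+1)"
    by (rule stepJ[OF a b]) simp
  then show ?thesis by simp
qed

lemma thirdF: "gam^n * zeta (2*int m - 2*int n + 2) \<in> Jm (2*int m+1)"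
proof -
  have b2: "gam^1 * zeta (2*int m+1) \<in> Jm (2*int m+1)" by (rule J_mult, rule J_gen0)
  have b3: "zeta (2*int m+2) \<in> Jm (2*int m+1)" by (rule J_gen1') simp
  have b1: "gam^1 * zeta (2*int m) \<in> Jm (2*int m+1)" using gam_em by simp
  show ?thesis using descent[of 1 m, OF _ b1 b2 b3, of n] by simp
qed

lemma chain: "j \<le> m \<Longrightarrow> Wc m j \<in> Jm (2*int m+1)"
proof (induction j)
  case 0
  have "Wc m 0 = 0" by (simp add: Wc_def Dt_0 Et_0 z0 z1 algebra_simps)
  then show ?case by (simp add: J_0)
next
  case (Suc j)
  then have IH: "Wc m j \<in> Jm (2*int m+1)" by simp
  define n where "n = m - Suc j"
  have ii: "2*int m - 2*int n + 2 = 2*int j+4" using Suc.prems n_def by simp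
  have T: "gam^(m - Suc j) * zeta (2*int j+4) \<in> Jm (2*int m+1)"
    using thirdF[of n m] unfolding ii unfolding n_def .
  show ?case unfolding W_step[OF Suc.prems]
    by (intro J_add J_mult IH T)
qed

lemma pc_add: "[:a + b:] = [:a:] + [:b:]" by simp

lemma lin_id:
  fixes D E z z1 t g :: "'a::comm_ring_1"
  assumes "g = 1"
  shows "(4*(2*t+1))*((D+E)*z) = D*(g*z1 + 4*(2*t+1)*(g*z)) + E*(4*(2*t+1)*(g*z) - g*z1) - (D - E)*z1"
  using assms by (simp add: algebra_simps)

lemma Vmem: "[:dp m + ep m:] * zeta (2*int m) \<in> Jm (2*int m+1)"
proof -
  have c: "(of_int (4*(2*int m+1)) :: R2) = 4*(2*of_nat m+1)" by simp
  have eq: "of_int (4*(2*int m+1)) * ([:dp m + ep m:] * zeta (2*int m)) = Wc m m - ([:dp m:] - [:ep m:]) * zeta (2*int m+1)"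
    unfolding c pc_add Wc_def by (rule lin_id) simp
  have "of_int (4*(2*int m+1)) * ([:dp m + ep m:] * zeta (2*int m)) \<in> Jm (2*int m+1)"
    unfolding eq by (intro J_diff J_mult chain J_gen0) simp
  then show ?thesis by (rule J_cancel) simp
qed

lemma coeff_J:
  assumes "x \<in> Jm k" "gam * e \<in> Jm k"
  shows "[:coeff x 0:] * e \<in> Jm k"
proof -
  obtain a q where x: "x = pCons a q" by (cases x) auto
  have "[:coeff x 0:] * e = x * e - q * (gam * e)"
    by (simp add: x gam_def algebra_simps)
  then show ?thesis using assms by (simp add: J_diff J_mult J_mult2)
qed

definition pim :: "nat \<Rightarrow> complex poly" where
  "pim j = (\<Prod>l<j. [:- of_nat (16*(2*l+1)^2), 0, 1:])"

lemma coeff_ofint: "coeff (of_int c :: R2) 0 = of_int c"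
  by (simp add: of_int_poly)

lemma coeff_num[simp]: "coeff (numeral n :: 'a::comm_ring_1 poly) 0 = numeral n"
  by (simp add: numeral_poly)
lemma coeff_ofnat[simp]: "coeff (of_nat n :: 'a::comm_ring_1 poly) 0 = of_nat n"
  by (simp add: of_nat_poly)

lemma coeff_gam: "coeff gam 0 = 0" by (simp add: gam_def)
lemma coeff_alph: "coeff alph 0 = [:0,1:]" by (simp add: alph_def)

lemma pim_Suc_id: "[:0,1:] * ([:0,1:] * p) - of_int (16*(2*int j+1)^2) * p = p * [:- of_nat (16*(2*j+1)^2), 0, 1:]"
  for p :: "complex poly"
  by (simp add: of_int_poly algebra_simps)

lemma coeff_z: "coeff (zeta (2*int j)) 0 = pim j \<and> coeff (zeta (2*int j+1)) 0 = [:0,1:] * pim j"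
proof (induction j)
  case 0 then show ?case by (simp add: pim_def z0 z1 coeff_alph)
next
  case (Suc j)
  then have A: "coeff (zeta (2*int j)) 0 = pim j" and B: "coeff (zeta (2*int j+1)) 0 = [:0,1:] * pim j" by auto
  have r: "zeta (2*int j+1+1) = alph * zeta (2*int j+1) - of_int (if odd (2*int j+1) then 16*(2*int j+1)^2 else 0) * zeta (2*int j+1-1)
          + of_int (2*(2*int j+1)*(2*int j+1-1)) * gam * zeta (2*int j+1-2)"
    by (rule zrec) simp
  have i: "2*int j+1+1 = 2*int (Suc j)" "2*int j+1-1 = 2*int j" by simp_all
  have o: "odd (2*int j+1)" by simp
  have C: "coeff (zeta (2*int (Suc j))) 0 = pim (Suc j)"
  proof -
    have "coeff (zeta (2*int (Suc j))) 0 = [:0,1:] * ([:0,1:] * pim j) - of_int (16*(2*int j+1)^2) * pim j"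
      using r unfolding i by (simp add: o coeff_mult_0 coeff_0_power coeff_gam coeff_alph A B)
    also have "\<dots> = pim j * [:- of_nat (16*(2*j+1)^2), 0, 1:]" by (rule pim_Suc_id)
    also have "\<dots> = pim (Suc j)" by (simp add: pim_def)
    finally show ?thesis .
  qed
  have i2: "2*int (Suc j) + 1 = 2*int j+3" "2*int (Suc j) = 2*int j+2" by simp_all
  have D: "coeff (zeta (2*int (Suc j)+1)) 0 = [:0,1:] * pim (Suc j)"
    using C unfolding i2(1) unfolding zr1 i2(2) by (simp add: coeff_mult_0 coeff_gam coeff_alph)
  show ?case using C D by simp
qed

lemma pim_root:
  assumes "poly (pim m) a = 0"
  shows "\<exists>l<m. a = of_nat (4*(2*l+1)) \<or> a = - of_nat (4*(2*l+1))"
proof -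
  have "(\<Prod>l<m. poly [:- of_nat (16*(2*l+1)^2), 0, 1:] a) = 0"
    using assms by (simp add: pim_def poly_prod)
  then obtain l where l: "l < m" "poly [:- of_nat (16*(2*l+1)^2), 0, 1:] a = 0"
    by (auto simp: prod_zero_iff)
  define c :: complex where "c = of_nat (4*(2*l+1))"
  have "(a - c) * (a + c) = 0"
    using l(2) by (simp add: c_def algebra_simps power2_eq_square)
  then have "a - c = 0 \<or> a + c = 0" by simp
  then have "a = c \<or> a = - c" by (auto simp: eq_neg_iff_add_eq_0)
  then show ?thesis using l(1) unfolding c_def by blast
qed

lemma poly_dp: "poly (dp m) x = (\<Prod>l\<le>m. of_nat (4*(2*l+1)) - x)"
  by (simp add: dp_def poly_prod)
lemma poly_ep: "poly (ep m) x = (\<Prod>l\<le>m. - of_nat (4*(2*l+1)) - x)"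
  by (simp add: ep_def poly_prod)

lemma V_nonzero:
  assumes "l < m"
  shows "poly (dp m + ep m) (of_nat (4*(2*l+1))) \<noteq> 0"
    and "poly (dp m + ep m) (- of_nat (4*(2*l+1))) \<noteq> 0"
proof -
  have z1: "poly (dp m) (of_nat (4*(2*l+1))) = 0"
    unfolding poly_dp using assms by (auto simp: prod_zero_iff intro!: bexI[of _ l])
  have n1: "poly (ep m) (of_nat (4*(2*l+1))) \<noteq> 0"
  proof -
    have "\<forall>l'\<le>m. (- of_nat (4*(2*l'+1)) - of_nat (4*(2*l+1)) :: complex) \<noteq> 0"
    proof (intro allI impI)
      fix l' assume "l' \<le> m"
      have "(- of_nat (4*(2*l'+1)) - of_nat (4*(2*l+1)) :: complex) = - of_nat (4*(2*l'+1) + 4*(2*l+1))" by simp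
      also have "\<dots> \<noteq> 0" by (simp only: neg_equal_0_iff_equal of_nat_eq_0_iff) simp
      finally show "(- of_nat (4*(2*l'+1)) - of_nat (4*(2*l+1)) :: complex) \<noteq> 0" .
    qed
    then show ?thesis unfolding poly_ep by (simp add: prod_zero_iff)
  qed
  show "poly (dp m + ep m) (of_nat (4*(2*l+1))) \<noteq> 0" using z1 n1 by simp
  have z2: "poly (ep m) (- of_nat (4*(2*l+1))) = 0"
    unfolding poly_ep using assms by (auto simp: prod_zero_iff intro!: bexI[of _ l])
  have n2: "poly (dp m) (- of_nat (4*(2*l+1))) \<noteq> 0"
  proof -
    have "\<forall>l'\<le>m. (of_nat (4*(2*l'+1)) - - of_nat (4*(2*l+1)) :: complex) \<noteq> 0"
    proof (intro allI impI)
      fix l' assume "l' \<le> m"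
      have "(of_nat (4*(2*l'+1)) - - of_nat (4*(2*l+1)) :: complex) = of_nat (4*(2*l'+1) + 4*(2*l+1))" by simp
      also have "\<dots> \<noteq> 0" by (simp only: of_nat_eq_0_iff) simp
      finally show "(of_nat (4*(2*l'+1)) - - of_nat (4*(2*l+1)) :: complex) \<noteq> 0" .
    qed
    then show ?thesis unfolding poly_dp by (simp add: prod_zero_iff)
  qed
  show "poly (dp m + ep m) (- of_nat (4*(2*l+1))) \<noteq> 0" using z2 n2 by simp
qed

lemma bez:
  fixes V Q :: "complex poly"
  assumes "Q \<noteq> 0" "\<And>a. poly Q a = 0 \<Longrightarrow> poly V a \<noteq> 0"
  shows "\<exists>x y. x * V + y * Q = 1"
proof -
  define d where "d = gcd V Q"
  have bz: "fst (bezout_coefficients V Q) * V + snd (bezout_coefficients V Q) * Q = d"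
    unfolding d_def by (rule bezout_coefficients_fst_snd)
  have dnz: "d \<noteq> 0" using assms(1) by (simp add: d_def)
  have deg: "degree d = 0"
  proof (rule ccontr)
    assume "degree d \<noteq> 0"
    then have "\<not> constant (poly d)" by (simp add: constant_degree)
    then obtain z where z: "poly d z = 0" using fundamental_theorem_of_algebra by blast
    have "d dvd V" "d dvd Q" by (simp_all add: d_def)
    then have "poly V z = 0" "poly Q z = 0" using z by (auto elim!: dvdE)
    then show False using assms(2) by blast
  qed
  then obtain c where c: "d = [:c:]" by (metis degree_eq_zeroE)
  with dnz have cnz: "c \<noteq> 0" by simp
  have "smult (1/c) (fst (bezout_coefficients V Q)) * V + smult (1/c) (snd (bezout_coefficients V Q)) * Q = smult (1/c) d"
    using bz by (metis smult_add_right mult_smult_left)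
  also have "\<dots> = 1" using c cnz by (simp add: one_pCons)
  finally show ?thesis by blast
qed

lemma em_in_J: "zeta (2*int m) \<in> Jm (2*int m+1)"
proof -
  define c :: complex where "c = of_nat (16*(2*m+1)^2)"
  define Q where "Q = [:0,1:] * ([:0,1:] * pim m) - pim m * [:- c, 0, 1:]"
  define x0 where "x0 = alph * zeta (2*int m+1) - zeta (2*int (Suc m))"
  have x0J: "x0 \<in> Jm (2*int m+1)"
    unfolding x0_def by (intro J_diff J_mult J_gen0 J_gen1') simp
  have cx: "coeff x0 0 = Q"
    using coeff_z[of m] coeff_z[of "Suc m"]
    by (simp add: x0_def Q_def coeff_mult_0 coeff_alph pim_def c_def)
  have QJ: "[:Q:] * zeta (2*int m) \<in> Jm (2*int m+1)"
    using coeff_J[OF x0J gam_em] unfolding cx .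
  have cnz: "c \<noteq> 0" unfolding c_def by (simp only: of_nat_eq_0_iff) simp
  have pQ: "poly Q a = poly (pim m) a * c" for a
    by (simp add: Q_def algebra_simps)
  have roots: "poly (dp m + ep m) a \<noteq> 0" if "poly Q a = 0" for a
  proof -
    have "poly (pim m) a = 0" using that cnz by (simp add: pQ)
    then obtain l where "l < m" "a = of_nat (4*(2*l+1)) \<or> a = - of_nat (4*(2*l+1))"
      using pim_root by blast
    then show ?thesis using V_nonzero by blast
  qed
  have Qnz: "Q \<noteq> 0"
  proof
    assume "Q = 0"
    then have "poly (pim m) 0 = 0" using cnz pQ[of 0] by simp
    then obtain l where "l < m" "(0::complex) = of_nat (4*(2*l+1)) \<or> (0::complex) = - of_nat (4*(2*l+1))"
      using pim_root by blast
    moreover have "(of_nat (4*(2*l+1)) :: complex) \<noteq> 0" by (simp only: of_nat_eq_0_iff) simp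
    ultimately show False by (metis neg_equal_0_iff_equal)
  qed
  obtain x y where xy: "x * (dp m + ep m) + y * Q = 1"
    using bez[OF Qnz roots] by blast
  have "zeta (2*int m) = [:x * (dp m + ep m) + y * Q:] * zeta (2*int m)"
    by (simp add: xy one_pCons[symmetric])
  also have "\<dots> = [:x:] * ([:dp m + ep m:] * zeta (2*int m)) + [:y:] * ([:Q:] * zeta (2*int m))"
    by (simp add: algebra_simps smult_add_left)
  finally have eq: "zeta (2*int m) = [:x:] * ([:dp m + ep m:] * zeta (2*int m)) + [:y:] * ([:Q:] * zeta (2*int m))" .
  show ?thesis
    by (subst eq) (intro J_add J_mult Vmem QJ)
qed

theorem lemma5p4:
  fixes g i :: nat
  assumes "g \<ge> 1" and "odd g"
  shows "(\<exists>u. unit_mod (Jm (int g)) u \<and>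
            cong_mod (Jm (int g)) (u * gam ^ i * zeta (int g - 2 * int i - 1))
                                  (gam ^ (i + 1) * zeta (int g - 2 * int i - 2)))
       \<and> (\<exists>v. unit_mod (Jm (int g)) v \<and>
            cong_mod (Jm (int g)) (v * gam ^ i * zeta (int g - 2 * int i - 1))
                                  (gam ^ (i + 1) * zeta (int g - 2 * int i - 3)))"
proof -
  obtain m where gm: "g = 2*m+1" using assms(2) oddE by blast
  have ig: "int g = 2*int m+1" using gm by simp
  have b1: "gam^0 * zeta (2*int m) \<in> Jm (2*int m+1)" using em_in_J by simp
  have b2: "gam^0 * zeta (2*int m+1) \<in> Jm (2*int m+1)" using J_gen0 by simp
  have b3: "zeta (2*int m+2) \<in> Jm (2*int m+1)" by (rule J_gen1') simp
  have D: "\<And>n. gam^n * zeta (2*int m - 2*int n) \<in> Jm (2*int m+1) \<and>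
         gam^n * zeta (2*int m - 2*int n + 1) \<in> Jm (2*int m+1)"
    using descent[of 0 m, OF _ b1 b2 b3] by simp
  have unit1: "unit_mod (Jm (int g)) 1"
    unfolding unit_mod_def cong_mod_def by (rule exI[of _ 1]) (simp add: J_0)
  have t1: "gam ^ i * zeta (int g - 2 * int i - 1) \<in> Jm (int g)"
  proof -
    have e: "int g - 2 * int i - 1 = 2*int m - 2*int i" using ig by simp
    show ?thesis unfolding e unfolding ig using conjunct1[OF D[of i]] by simp
  qed
  have t2: "gam ^ (i+1) * zeta (int g - 2 * int i - 2) \<in> Jm (int g)"
  proof -
    have e: "int g - 2 * int i - 2 = 2*int m - 2*int (i+1) + 1" using ig by simp
    show ?thesis unfolding e unfolding ig by (rule conjunct2[OF D[of "i+1"]])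
  qed
  have t3: "gam ^ (i+1) * zeta (int g - 2 * int i - 3) \<in> Jm (int g)"
  proof -
    have e: "int g - 2 * int i - 3 = 2*int m - 2*int (i+1)" using ig by simp
    show ?thesis unfolding e unfolding ig by (rule conjunct1[OF D[of "i+1"]])
  qed
  show ?thesis
  proof (intro conjI exI[of _ 1])
    show "unit_mod (Jm (int g)) 1" by (rule unit1)
    show "unit_mod (Jm (int g)) 1" by (rule unit1)
    show "cong_mod (Jm (int g)) (1 * gam ^ i * zeta (int g - 2 * int i - 1)) (gam ^ (i + 1) * zeta (int g - 2 * int i - 2))"
      unfolding cong_mod_def using J_diff[OF t1 t2] by simp
    show "cong_mod (Jm (int g)) (1 * gam ^ i * zeta (int g - 2 * int i - 1)) (gam ^ (i + 1) * zeta (int g - 2 * int i - 3))"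
      unfolding cong_mod_def using J_diff[OF t1 t3] by simp
  qed
qed

end
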